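(* Let $M,X$ be metric spaces with $\#M\ge3$ and $r:=d_{GH}(M,X)<s(M)/2$. Let $d$ be a real number with $r<d\le s(M)/2$. Then: (1) there exists a correspondence $R\in\mathcal{R}(M,X)$ with $\operatorname{dis}R<2d\le s(M)$; (2) for each such $R$, the family $D_R=\{X_i:=R(i)\}_{i\in M}$ is a partition of $X$ (the sets $X_i$ are nonempty, pairwise disjoint and cover $X$); (3) for all $i,j\in M$ (possibly equal) and all $x_i\in X_i$, $x_j\in X_j$, one has $||x_ix_j|-|ij||<2d\le s(M)$; (4) $\operatorname{diam}X_i<2d\le s(M)$ for all $i\in M$; (5) if $d\le s(M)/4$, then the partition $D_R$ is uniquely determined: if $R'\in\mathcal{R}(M,X)$ also satisfies $\operatorname{dis}R'<2d$, then $D_{R'}=D_R$; (6) if $d\le\min\{s(M)/4,e(M)/4\}$, then the correspondence $R\in\mathcal{R}(M,X)$ with $\operatorname{dis}R<2d$ is unique; consequently $R$ is optimal, $\operatorname{dis}R=2d_{GH}(M,X)$, $\operatorname{diam}X_i\le\operatorname{dis}R$ for all $i$, and $||x_ix_j|-|ij||\le\operatorname{dis}R$ for all $i\ne j$, $x_i\in X_i$, $x_j\in X_j$.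
   Context: For sets $X,Y$, a correspondence is a relation $R\subset X\times Y$ whose projections to $X$ and $Y$ are both surjective; $\mathcal{R}(X,Y)$ is the set of correspondences, and $R(x)=\{y:(x,y)\in R\}$. For metric spaces, the distortion is $\operatorname{dis}R=\sup\{||xx'|-|yy'||:(x,y),(x',y')\in R\}$, and the Gromov–Hausdorff distance satisfies $d_{GH}(X,Y)=\frac12\inf\{\operatorname{dis}R: R\in\mathcal{R}(X,Y)\}$; $R$ is optimal if $\operatorname{dis}R=2d_{GH}(X,Y)$. For a metric space $M$ with $\#M\ge3$: $s(M)=\inf\{|xx'|: x\ne x'\}$; $S(M)$ is the set of bijections $M\to M$ and $e(M)=\inf\{\operatorname{dis}f: f\in S(M), f\ne\mathrm{id}\}$, where $\operatorname{dis}f=\sup_{x,x'}||xx'|-|f(x)f(x')||$ (the distortion of the graph of $f$). *)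

theory Defs
  imports "HOL-Analysis.Analysis"
begin

definition correspondence :: "'a set \<Rightarrow> 'b set \<Rightarrow> ('a \<times> 'b) set \<Rightarrow> bool" where
  "correspondence M X R \<longleftrightarrow> R \<subseteq> M \<times> X \<and> fst ` R = M \<and> snd ` R = X"

definition dis :: "('a \<Rightarrow> 'a \<Rightarrow> real) \<Rightarrow> ('b \<Rightarrow> 'b \<Rightarrow> real) \<Rightarrow> ('a \<times> 'b) set \<Rightarrow> ereal" where
  "dis dM dX R = (SUP p\<in>R. SUP q\<in>R. ereal \<bar>dM (fst p) (fst q) - dX (snd p) (snd q)\<bar>)"

definition dGH :: "'a set \<Rightarrow> ('a \<Rightarrow> 'a \<Rightarrow> real) \<Rightarrow> 'b set \<Rightarrow> ('b \<Rightarrow> 'b \<Rightarrow> real) \<Rightarrow> ereal" where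
  "dGH M dM X dX = (INF R\<in>{R. correspondence M X R}. dis dM dX R) / 2"

definition sM :: "'a set \<Rightarrow> ('a \<Rightarrow> 'a \<Rightarrow> real) \<Rightarrow> real" where
  "sM M dM = Inf {dM x x' | x x'. x \<in> M \<and> x' \<in> M \<and> x \<noteq> x'}"

definition dis_map :: "'a set \<Rightarrow> ('a \<Rightarrow> 'a \<Rightarrow> real) \<Rightarrow> ('a \<Rightarrow> 'a) \<Rightarrow> ereal" where
  "dis_map M dM f = (SUP x\<in>M. SUP x'\<in>M. ereal \<bar>dM x x' - dM (f x) (f x')\<bar>)"

definition eM :: "'a set \<Rightarrow> ('a \<Rightarrow> 'a \<Rightarrow> real) \<Rightarrow> ereal" where
  "eM M dM = (INF f\<in>{f. bij_betw f M M \<and> (\<exists>x\<in>M. f x \<noteq> x)}. dis_map M dM f)"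

definition diam :: "('b \<Rightarrow> 'b \<Rightarrow> real) \<Rightarrow> 'b set \<Rightarrow> ereal" where
  "diam dX A = (SUP x\<in>A. SUP y\<in>A. ereal (dX x y))"

end

theory Submission imports Defs begin

lemma dis_pair:
  assumes "(i,x)\<in>R" "(j,y)\<in>R"
  shows "ereal \<bar>dM i j - dX x y\<bar> \<le> dis dM dX R"
proof -
  have "ereal \<bar>dM i j - dX x y\<bar> \<le> (SUP q\<in>R. ereal \<bar>dM (fst (i,x)) (fst q) - dX (snd (i,x)) (snd q)\<bar>)"
    by (rule SUP_upper2[OF assms(2)]) simp
  also have "\<dots> \<le> dis dM dX R" unfolding dis_def by (rule SUP_upper[OF assms(1)])
  finally show ?thesis .
qed

lemma dis_nonneg:
  assumes "correspondence M X R" "M \<noteq> {}"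
  shows "0 \<le> dis dM dX R"
proof -
  from assms obtain p where "p \<in> R" unfolding correspondence_def by auto
  then obtain i x where p: "(i,x)\<in>R" by (cases p) auto
  have "0 \<le> ereal \<bar>dM i i - dX x x\<bar>" by simp
  also have "\<dots> \<le> dis dM dX R" by (rule dis_pair[OF p p])
  finally show ?thesis .
qed

lemma dis_finite:
  assumes "correspondence M X R" "M \<noteq> {}" "dis dM dX R < ereal c"
  obtains a where "dis dM dX R = ereal a" "0 \<le> a" "a < c"
proof -
  have "0 \<le> dis dM dX R" by (rule dis_nonneg[OF assms(1,2)])
  with assms(3) show ?thesis using that by (cases "dis dM dX R") auto
qed

lemma dis_real:
  assumes "dis dM dX R = ereal a" "(i,x)\<in>R" "(j,y)\<in>R"
  shows "\<bar>dM i j - dX x y\<bar> \<le> a"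
  using dis_pair[OF assms(2,3), of dM dX] assms(1) by simp

lemma sM_le:
  assumes "Metric_space M dM" "i\<in>M" "j\<in>M" "i\<noteq>j"
  shows "sM M dM \<le> dM i j"
  unfolding sM_def
  apply (rule cInf_lower)
  using assms apply blast
  apply (rule bdd_belowI[where m=0])
  using Metric_space.nonneg[OF assms(1)] by auto

lemma corr_mem:
  assumes "correspondence M X R" "(i,x)\<in>R" shows "i\<in>M" "x\<in>X"
  using assms unfolding correspondence_def by auto

lemma corr_ex_left:
  assumes "correspondence M X R" "x\<in>X" obtains j where "(j,x)\<in>R" "j\<in>M"
  using assms unfolding correspondence_def by (metis (no_types, lifting) image_iff mem_Sigma_iff prod.collapse subsetD)

lemma corr_ex_right:
  assumes "correspondence M X R" "i\<in>M" obtains x where "(i,x)\<in>R" "x\<in>X"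
  using assms unfolding correspondence_def by (metis (no_types, lifting) image_iff mem_Sigma_iff prod.collapse subsetD)

lemma disjoint_fibers:
  assumes mM: "Metric_space M dM" and mX: "Metric_space X dX"
    and C: "correspondence M X R" and D: "dis dM dX R < ereal c" and s: "c \<le> sM M dM"
    and "(i,x)\<in>R" "(j,x)\<in>R"
  shows "i = j"
proof (rule ccontr)
  assume ne: "i \<noteq> j"
  have iM: "i\<in>M" "j\<in>M" "x\<in>X" using corr_mem[OF C] assms(6,7) by auto
  have "M \<noteq> {}" using iM by auto
  then obtain a where a: "dis dM dX R = ereal a" "a < c" using dis_finite[OF C _ D] by metis
  have "\<bar>dM i j - dX x x\<bar> \<le> a" by (rule dis_real[OF a(1) assms(6,7)])
  moreover have "dX x x = 0" using iM mX Metric_space.zero by fastforce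
  moreover have "sM M dM \<le> dM i j" using sM_le[OF mM iM(1,2) ne] .
  ultimately show False using a s by auto
qed

lemma fiber_eq:
  assumes mM: "Metric_space M dM" and mX: "Metric_space X dX"
    and C: "correspondence M X R" and D: "dis dM dX R < ereal (2*d)"
    and C': "correspondence M X R'" and D': "dis dM dX R' < ereal (2*d)"
    and s: "4*d \<le> sM M dM"
    and ix: "(i,x)\<in>R" and jx: "(j,x)\<in>R'"
  shows "R``{i} = R'``{j}"
proof -
  have iM: "i\<in>M" "j\<in>M" "x\<in>X" using corr_mem[OF C ix] corr_mem[OF C' jx] by auto
  then have ne: "M \<noteq> {}" by auto
  obtain a where a: "dis dM dX R = ereal a" "a < 2*d" using dis_finite[OF C ne D] by metis
  obtain b where b: "dis dM dX R' = ereal b" "b < 2*d" using dis_finite[OF C' ne D'] by metis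
  note tri = Metric_space.triangle[OF mM]
  show ?thesis
  proof (intro equalityI subsetI)
    fix y assume "y \<in> R``{i}"
    then have iy: "(i,y)\<in>R" by auto
    then have yX: "y\<in>X" using corr_mem[OF C] by auto
    obtain k where ky: "(k,y)\<in>R'" "k\<in>M" using corr_ex_left[OF C' yX] by metis
    have "\<bar>dM i i - dX x y\<bar> \<le> a" by (rule dis_real[OF a(1) ix iy])
    moreover have "\<bar>dM j k - dX x y\<bar> \<le> b" by (rule dis_real[OF b(1) jx ky(1)])
    moreover have "dM i i = 0" using iM mM Metric_space.zero by fastforce
    ultimately have "dM j k < sM M dM" using a b s by auto
    then have "j = k" using sM_le[OF mM iM(2) ky(2)] by fastforce
    then show "y \<in> R'``{j}" using ky by auto
  next
    fix y assume "y \<in> R'``{j}"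
    then have jy: "(j,y)\<in>R'" by auto
    then have yX: "y\<in>X" using corr_mem[OF C'] by auto
    obtain k where ky: "(k,y)\<in>R" "k\<in>M" using corr_ex_left[OF C yX] by metis
    have "\<bar>dM j j - dX x y\<bar> \<le> b" by (rule dis_real[OF b(1) jx jy])
    moreover have "\<bar>dM i k - dX x y\<bar> \<le> a" by (rule dis_real[OF a(1) ix ky(1)])
    moreover have "dM j j = 0" using iM mM Metric_space.zero by fastforce
    ultimately have "dM i k < sM M dM" using a b s by auto
    then have "i = k" using sM_le[OF mM iM(1) ky(2)] by fastforce
    then show "y \<in> R``{i}" using ky by auto
  qed
qed


lemma diam_le:
  assumes mM: "Metric_space M dM" and mX: "Metric_space X dX" and C: "correspondence M X R" and iM: "i\<in>M"
  shows "diam dX (R``{i}) \<le> dis dM dX R"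
  unfolding diam_def
proof (intro SUP_least)
  fix x y assume "x \<in> R``{i}" "y \<in> R``{i}"
  then have p: "(i,x)\<in>R" "(i,y)\<in>R" by auto
  have "dM i i = 0" using iM mM Metric_space.zero by fastforce
  moreover have "0 \<le> dX x y" using mX Metric_space.nonneg by fastforce
  ultimately have "ereal (dX x y) = ereal \<bar>dM i i - dX x y\<bar>" by simp
  also have "\<dots> \<le> dis dM dX R" by (rule dis_pair[OF p])
  finally show "ereal (dX x y) \<le> dis dM dX R" .
qed

lemma uniq_sub:
  assumes mM: "Metric_space M dM" and mX: "Metric_space X dX"
    and C: "correspondence M X R" and D: "dis dM dX R < ereal (2*d)"
    and C': "correspondence M X R'" and D': "dis dM dX R' < ereal (2*d)"
    and s: "4*d \<le> sM M dM" and e: "ereal (4*d) \<le> eM M dM"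
  shows "R \<subseteq> R'"
proof (cases "M = {}")
  case True then show ?thesis using C unfolding correspondence_def by auto
next
  case ne: False
  obtain a where a: "dis dM dX R = ereal a" "0 \<le> a" "a < 2*d" using dis_finite[OF C ne D] by metis
  obtain b where b: "dis dM dX R' = ereal b" "0 \<le> b" "b < 2*d" using dis_finite[OF C' ne D'] by metis
  have s2: "2*d \<le> sM M dM" using s a by linarith
  define f where "f i = (SOME j. j\<in>M \<and> R``{i} = R'``{j})" for i
  have f: "f i \<in> M \<and> R``{i} = R'``{f i}" if iM: "i\<in>M" for i
  proof -
    obtain x where ix: "(i,x)\<in>R" "x\<in>X" using corr_ex_right[OF C iM] by metis
    obtain j where jx: "(j,x)\<in>R'" "j\<in>M" using corr_ex_left[OF C' ix(2)] by metis
    have "R``{i} = R'``{j}" by (rule fiber_eq[OF mM mX C D C' D' s ix(1) jx(1)])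
    then have "\<exists>j. j\<in>M \<and> R``{i} = R'``{j}" using jx by blast
    then show ?thesis unfolding f_def by (rule someI_ex)
  qed
  have inj: "inj_on f M"
  proof (rule inj_onI)
    fix i i' assume i: "i\<in>M" "i'\<in>M" "f i = f i'"
    then have "R``{i} = R``{i'}" using f by metis
    moreover obtain x where ix: "(i,x)\<in>R" "x\<in>X" using corr_ex_right[OF C i(1)] by metis
    ultimately have "(i',x)\<in>R" by auto
    then show "i = i'" using disjoint_fibers[OF mM mX C D s2 ix(1)] by blast
  qed
  have img: "f ` M = M"
  proof
    show "f ` M \<subseteq> M" using f by auto
    show "M \<subseteq> f ` M"
    proof
      fix j assume jM: "j\<in>M"
      obtain y where jy: "(j,y)\<in>R'" "y\<in>X" using corr_ex_right[OF C' jM] by metis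
      obtain i where iy: "(i,y)\<in>R" "i\<in>M" using corr_ex_left[OF C jy(2)] by metis
      have "(f i, y) \<in> R'" using f[OF iy(2)] iy(1) by auto
      then have "f i = j" using disjoint_fibers[OF mM mX C' D' s2 _ jy(1)] by blast
      then show "j \<in> f ` M" using iy(2) by blast
    qed
  qed
  have bij: "bij_betw f M M" using inj img by (simp add: bij_betw_def)
  have dm: "dis_map M dM f \<le> ereal (a+b)"
    unfolding dis_map_def
  proof (intro SUP_least)
    fix i i' assume i: "i\<in>M" "i'\<in>M"
    obtain x where ix: "(i,x)\<in>R" using corr_ex_right[OF C i(1)] by metis
    obtain x' where ix': "(i',x')\<in>R" using corr_ex_right[OF C i(2)] by metis
    have fx: "(f i,x)\<in>R'" "(f i',x')\<in>R'" using f[OF i(1)] f[OF i(2)] ix ix' by auto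
    have "\<bar>dM i i' - dX x x'\<bar> \<le> a" by (rule dis_real[OF a(1) ix ix'])
    moreover have "\<bar>dM (f i) (f i') - dX x x'\<bar> \<le> b" by (rule dis_real[OF b(1) fx])
    ultimately show "ereal \<bar>dM i i' - dM (f i) (f i')\<bar> \<le> ereal (a+b)" by simp
  qed
  have fid: "\<forall>i\<in>M. f i = i"
  proof (rule ccontr)
    assume "\<not> (\<forall>i\<in>M. f i = i)"
    then have "f \<in> {f. bij_betw f M M \<and> (\<exists>x\<in>M. f x \<noteq> x)}" using bij by auto
    then have "eM M dM \<le> dis_map M dM f" unfolding eM_def by (rule INF_lower)
    with dm e have "ereal (4*d) \<le> ereal (a+b)" by (meson order_trans)
    with a b show False by simp
  qed
  show ?thesis
  proof
    fix p assume p: "p \<in> R"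
    obtain i x where pix: "p = (i,x)" by (cases p)
    have iM: "i\<in>M" using corr_mem[OF C] p pix by auto
    have "R``{i} = R'``{i}" using f[OF iM] fid iM by metis
    then show "p \<in> R'" using p pix by auto
  qed
qed

theorem mainTheorem15:
  fixes M :: "'a set" and dM :: "'a \<Rightarrow> 'a \<Rightarrow> real"
    and X :: "'b set" and dX :: "'b \<Rightarrow> 'b \<Rightarrow> real"
    and d :: real
  assumes "Metric_space M dM" and "Metric_space X dX"
    and "infinite M \<or> card M \<ge> 3"
    and "dGH M dM X dX < ereal (sM M dM / 2)"
    and "dGH M dM X dX < ereal d" and "d \<le> sM M dM / 2"
  shows
    "(\<exists>R. correspondence M X R \<and> dis dM dX R < ereal (2 * d) \<and> 2 * d \<le> sM M dM)
   \<and> (\<forall>R. correspondence M X R \<and> dis dM dX R < ereal (2 * d) \<longrightarrow>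
        (\<forall>i\<in>M. R `` {i} \<noteq> {})
      \<and> (\<forall>i\<in>M. \<forall>j\<in>M. i \<noteq> j \<longrightarrow> R `` {i} \<inter> R `` {j} = {})
      \<and> (\<Union>i\<in>M. R `` {i}) = X)
   \<and> (\<forall>R. correspondence M X R \<and> dis dM dX R < ereal (2 * d) \<longrightarrow>
        (\<forall>i\<in>M. \<forall>j\<in>M. \<forall>xi\<in>R `` {i}. \<forall>xj\<in>R `` {j}.
            \<bar>dX xi xj - dM i j\<bar> < 2 * d \<and> 2 * d \<le> sM M dM))
   \<and> (\<forall>R. correspondence M X R \<and> dis dM dX R < ereal (2 * d) \<longrightarrow>
        (\<forall>i\<in>M. diam dX (R `` {i}) < ereal (2 * d) \<and> 2 * d \<le> sM M dM))
   \<and> (d \<le> sM M dM / 4 \<longrightarrow>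
        (\<forall>R R'. correspondence M X R \<and> dis dM dX R < ereal (2 * d)
            \<and> correspondence M X R' \<and> dis dM dX R' < ereal (2 * d) \<longrightarrow>
            (\<lambda>i. R `` {i}) ` M = (\<lambda>i. R' `` {i}) ` M))
   \<and> (d \<le> sM M dM / 4 \<and> ereal d \<le> eM M dM / 4 \<longrightarrow>
        (\<exists>!R. correspondence M X R \<and> dis dM dX R < ereal (2 * d))
      \<and> (\<forall>R. correspondence M X R \<and> dis dM dX R < ereal (2 * d) \<longrightarrow>
            dis dM dX R = 2 * dGH M dM X dX
          \<and> (\<forall>i\<in>M. diam dX (R `` {i}) \<le> dis dM dX R)
          \<and> (\<forall>i\<in>M. \<forall>j\<in>M. i \<noteq> j \<longrightarrow> (\<forall>xi\<in>R `` {i}. \<forall>xj\<in>R `` {j}.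
                ereal \<bar>dX xi xj - dM i j\<bar> \<le> dis dM dX R))))"
proof -
  note mM = assms(1) and mX = assms(2)
  have ne: "M \<noteq> {}" using assms(3) by auto
  define C where "C = {R. correspondence M X R}"
  define I where "I = (INF R\<in>C. dis dM dX R)"
  have dGH: "dGH M dM X dX = I / 2" unfolding dGH_def I_def C_def by simp
  have I2: "I < ereal (2*d)" using assms(5) unfolding dGH by (cases I) auto
  then obtain R0 where R0: "R0 \<in> C" "dis dM dX R0 < ereal (2*d)" unfolding I_def by (auto simp: INF_less_iff)
  have C0: "correspondence M X R0" using R0 C_def by auto
  obtain a0 where "dis dM dX R0 = ereal a0" "0 \<le> a0" "a0 < 2*d" using dis_finite[OF C0 ne R0(2)] by metis
  then have dpos: "0 < d" by simp
  have s2: "2*d \<le> sM M dM" using assms(6) by linarith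
  have P1: "\<exists>R. correspondence M X R \<and> dis dM dX R < ereal (2 * d) \<and> 2 * d \<le> sM M dM"
    using C0 R0 s2 by blast
  have P2: "\<forall>R. correspondence M X R \<and> dis dM dX R < ereal (2 * d) \<longrightarrow>
        (\<forall>i\<in>M. R `` {i} \<noteq> {})
      \<and> (\<forall>i\<in>M. \<forall>j\<in>M. i \<noteq> j \<longrightarrow> R `` {i} \<inter> R `` {j} = {})
      \<and> (\<Union>i\<in>M. R `` {i}) = X"
  proof (intro allI impI conjI)
    fix R assume H: "correspondence M X R \<and> dis dM dX R < ereal (2 * d)"
    then have C: "correspondence M X R" and D: "dis dM dX R < ereal (2 * d)" by auto
    show "\<forall>i\<in>M. R `` {i} \<noteq> {}" using corr_ex_right[OF C] by blast
    show "\<forall>i\<in>M. \<forall>j\<in>M. i \<noteq> j \<longrightarrow> R `` {i} \<inter> R `` {j} = {}"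
      using disjoint_fibers[OF mM mX C D s2] by blast
    show "(\<Union>i\<in>M. R `` {i}) = X"
    proof
      show "(\<Union>i\<in>M. R `` {i}) \<subseteq> X" using corr_mem[OF C] by blast
      show "X \<subseteq> (\<Union>i\<in>M. R `` {i})"
      proof
        fix x assume "x\<in>X"
        then obtain j where "(j,x)\<in>R" "j\<in>M" using corr_ex_left[OF C] by metis
        then show "x \<in> (\<Union>i\<in>M. R `` {i})" by blast
      qed
    qed
  qed
  have P3: "\<forall>R. correspondence M X R \<and> dis dM dX R < ereal (2 * d) \<longrightarrow>
        (\<forall>i\<in>M. \<forall>j\<in>M. \<forall>xi\<in>R `` {i}. \<forall>xj\<in>R `` {j}.
            \<bar>dX xi xj - dM i j\<bar> < 2 * d \<and> 2 * d \<le> sM M dM)"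
  proof (intro allI impI ballI conjI s2)
    fix R i j xi xj assume H: "correspondence M X R \<and> dis dM dX R < ereal (2 * d)"
      and "i\<in>M" "j\<in>M" "xi \<in> R``{i}" "xj \<in> R``{j}"
    then have p: "(i,xi)\<in>R" "(j,xj)\<in>R" by auto
    obtain a where a: "dis dM dX R = ereal a" "a < 2*d" using dis_finite[of M X R dM dX] H ne by metis
    have "\<bar>dM i j - dX xi xj\<bar> \<le> a" by (rule dis_real[OF a(1) p])
    then show "\<bar>dX xi xj - dM i j\<bar> < 2 * d" using a by linarith
  qed
  have P4: "\<forall>R. correspondence M X R \<and> dis dM dX R < ereal (2 * d) \<longrightarrow>
        (\<forall>i\<in>M. diam dX (R `` {i}) < ereal (2 * d) \<and> 2 * d \<le> sM M dM)"
    using diam_le[OF mM mX] s2 by (meson order_le_less_trans)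
  have P5: "d \<le> sM M dM / 4 \<longrightarrow>
        (\<forall>R R'. correspondence M X R \<and> dis dM dX R < ereal (2 * d)
            \<and> correspondence M X R' \<and> dis dM dX R' < ereal (2 * d) \<longrightarrow>
            (\<lambda>i. R `` {i}) ` M = (\<lambda>i. R' `` {i}) ` M)"
  proof (intro impI allI)
    fix R R' assume s4: "d \<le> sM M dM / 4" and H: "correspondence M X R \<and> dis dM dX R < ereal (2 * d)
            \<and> correspondence M X R' \<and> dis dM dX R' < ereal (2 * d)"
    then have C: "correspondence M X R" and D: "dis dM dX R < ereal (2 * d)"
      and C': "correspondence M X R'" and D': "dis dM dX R' < ereal (2 * d)"
      and s: "4*d \<le> sM M dM" by auto
    have A: "(\<lambda>i. R1 `` {i}) ` M \<subseteq> (\<lambda>i. R2 `` {i}) ` M"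
      if C1: "correspondence M X R1" and D1: "dis dM dX R1 < ereal (2 * d)"
      and C2: "correspondence M X R2" and D2: "dis dM dX R2 < ereal (2 * d)" for R1 R2
    proof
      fix A assume "A \<in> (\<lambda>i. R1 `` {i}) ` M"
      then obtain i where i: "i\<in>M" "A = R1``{i}" by auto
      obtain x where ix: "(i,x)\<in>R1" "x\<in>X" using corr_ex_right[OF C1 i(1)] by metis
      obtain j where jx: "(j,x)\<in>R2" "j\<in>M" using corr_ex_left[OF C2 ix(2)] by metis
      have "R1``{i} = R2``{j}" by (rule fiber_eq[OF mM mX C1 D1 C2 D2 s ix(1) jx(1)])
      then show "A \<in> (\<lambda>i. R2 `` {i}) ` M" using i jx by auto
    qed
    show "(\<lambda>i. R `` {i}) ` M = (\<lambda>i. R' `` {i}) ` M"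
      using A[OF C D C' D'] A[OF C' D' C D] by blast
  qed
  have P6: "d \<le> sM M dM / 4 \<and> ereal d \<le> eM M dM / 4 \<longrightarrow>
        (\<exists>!R. correspondence M X R \<and> dis dM dX R < ereal (2 * d))
      \<and> (\<forall>R. correspondence M X R \<and> dis dM dX R < ereal (2 * d) \<longrightarrow>
            dis dM dX R = 2 * dGH M dM X dX
          \<and> (\<forall>i\<in>M. diam dX (R `` {i}) \<le> dis dM dX R)
          \<and> (\<forall>i\<in>M. \<forall>j\<in>M. i \<noteq> j \<longrightarrow> (\<forall>xi\<in>R `` {i}. \<forall>xj\<in>R `` {j}.
                ereal \<bar>dX xi xj - dM i j\<bar> \<le> dis dM dX R)))"
  proof (intro impI)
    assume H: "d \<le> sM M dM / 4 \<and> ereal d \<le> eM M dM / 4"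
    then have s: "4*d \<le> sM M dM" by auto
    have e: "ereal (4*d) \<le> eM M dM" using H by (cases "eM M dM") auto
    have U: "R = R'" if "correspondence M X R" "dis dM dX R < ereal (2 * d)"
      "correspondence M X R'" "dis dM dX R' < ereal (2 * d)" for R R'
      using uniq_sub[OF mM mX that(1,2,3,4) s e] uniq_sub[OF mM mX that(3,4,1,2) s e] by blast
    show "(\<exists>!R. correspondence M X R \<and> dis dM dX R < ereal (2 * d))
      \<and> (\<forall>R. correspondence M X R \<and> dis dM dX R < ereal (2 * d) \<longrightarrow>
            dis dM dX R = 2 * dGH M dM X dX
          \<and> (\<forall>i\<in>M. diam dX (R `` {i}) \<le> dis dM dX R)
          \<and> (\<forall>i\<in>M. \<forall>j\<in>M. i \<noteq> j \<longrightarrow> (\<forall>xi\<in>R `` {i}. \<forall>xj\<in>R `` {j}.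
                ereal \<bar>dX xi xj - dM i j\<bar> \<le> dis dM dX R)))"
    proof (intro conjI allI impI ballI)
      show "\<exists>!R. correspondence M X R \<and> dis dM dX R < ereal (2 * d)"
        using C0 R0(2) U by blast
    next
      fix R assume HR: "correspondence M X R \<and> dis dM dX R < ereal (2 * d)"
      then have C: "correspondence M X R" and D: "dis dM dX R < ereal (2 * d)" by auto
      have "I = dis dM dX R"
      proof (rule antisym)
        show "I \<le> dis dM dX R" unfolding I_def using C C_def by (auto intro: INF_lower)
        show "dis dM dX R \<le> I" unfolding I_def
        proof (rule INF_greatest)
          fix R'' assume "R'' \<in> C"
          then have C'': "correspondence M X R''" by (simp add: C_def)
          show "dis dM dX R \<le> dis dM dX R''"
          proof (rule ccontr)
            assume "\<not> dis dM dX R \<le> dis dM dX R''"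
            then have "dis dM dX R'' < ereal (2*d)" using D by auto
            then have "R'' = R" using U[OF C'' _ C D] by blast
            then show False using \<open>\<not> dis dM dX R \<le> dis dM dX R''\<close> by auto
          qed
        qed
      qed
      moreover obtain a where a: "dis dM dX R = ereal a" using dis_finite[OF C ne D] by metis
      ultimately show "dis dM dX R = 2 * dGH M dM X dX" unfolding dGH by simp
    next
      fix R i assume HR: "correspondence M X R \<and> dis dM dX R < ereal (2 * d)" and "i\<in>M"
      then show "diam dX (R `` {i}) \<le> dis dM dX R" using diam_le[OF mM mX] by blast
    next
      fix R i j xi xj assume "correspondence M X R \<and> dis dM dX R < ereal (2 * d)"
        "i\<in>M" "j\<in>M" "i\<noteq>j" "xi \<in> R``{i}" "xj \<in> R``{j}"
      then have p: "(i,xi)\<in>R" "(j,xj)\<in>R" by auto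
      have "ereal \<bar>dX xi xj - dM i j\<bar> = ereal \<bar>dM i j - dX xi xj\<bar>" by simp
      also have "\<dots> \<le> dis dM dX R" by (rule dis_pair[OF p])
      finally show "ereal \<bar>dX xi xj - dM i j\<bar> \<le> dis dM dX R" .
    qed
  qed
  show ?thesis using P1 P2 P3 P4 P5 P6 by blast
qed

end
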